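(* Let $\lambda$ be a partition of $n\ge0$ with $f^\lambda$ odd, and let $X$ be any $\beta$-set of $\lambda$. Then \[ g(X)=\begin{cases}1-(-1)^n,&|X|\text{ even},\\ (-1)^n,&|X|\text{ odd}.\end{cases} \]
   Context: $f^\lambda$ is the number of standard Young tableaux of shape $\lambda$ ($f^\varnothing=1$). For $\lambda=(\lambda_1\ge\dots\ge\lambda_k>0)$, $H(\lambda):=\{\lambda_i+k-i:1\le i\le k\}$; for finite $Y\subset\mathbb{Z}_{\ge0}$ and $r\ge0$, $Y^{+r}:=\{y+r:y\in Y\}\cup\{0,\dots,r-1\}$. The $\beta$-sets of $\lambda$ are the sets $H(\lambda)^{+r}$, $r\ge0$. For finite $X$, $g(X)$ is the number of even elements of $X$ minus the number of odd elements of $X$. *)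

theory Defs
  imports Main
begin

text \<open>A partition of n: a weakly decreasing list of positive naturals summing to n.
  Parts are indexed from 0, i.e. lam ! (i-1) is the paper's lambda_i.\<close>
definition is_partition :: "nat \<Rightarrow> nat list \<Rightarrow> bool" where
  "is_partition n lam \<longleftrightarrow> sorted_wrt (\<ge>) lam \<and> (\<forall>x\<in>set lam. 0 < x) \<and> sum_list lam = n"

definition young_diagram :: "nat list \<Rightarrow> (nat \<times> nat) set" where
  "young_diagram lam = {(i, j). i < length lam \<and> j < lam ! i}"

definition syt :: "nat list \<Rightarrow> ((nat \<times> nat) \<Rightarrow> nat) set" where
  "syt lam = {T. bij_betw T (young_diagram lam) {1..sum_list lam}
     \<and> (\<forall>c. c \<notin> young_diagram lam \<longrightarrow> T c = 0)
     \<and> (\<forall>i j. (i, j + 1) \<in> young_diagram lam \<longrightarrow> T (i, j) < T (i, j + 1))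
     \<and> (\<forall>i j. (i + 1, j) \<in> young_diagram lam \<longrightarrow> T (i, j) < T (i + 1, j))}"

definition num_syt :: "nat list \<Rightarrow> nat" where
  "num_syt lam = card (syt lam)"

text \<open>H(lam) = {lam_i + k - i : 1 \<le> i \<le> k}, written 0-indexed.\<close>
definition hook_set :: "nat list \<Rightarrow> nat set" where
  "hook_set lam = {lam ! i + (length lam - 1 - i) | i. i < length lam}"

definition shift_set :: "nat set \<Rightarrow> nat \<Rightarrow> nat set" where
  "shift_set Y r = (\<lambda>y. y + r) ` Y \<union> {0..<r}"

definition is_beta_set :: "nat list \<Rightarrow> nat set \<Rightarrow> bool" where
  "is_beta_set lam X \<longleftrightarrow> (\<exists>r. X = shift_set (hook_set lam) r)"

definition g :: "nat set \<Rightarrow> int" where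
  "g X = int (card {x\<in>X. even x}) - int (card {x\<in>X. odd x})"

end

theory Submission
  imports Defs
begin


definition sytS :: "(nat \<times> nat) set \<Rightarrow> ((nat \<times> nat) \<Rightarrow> nat) set" where
  "sytS S = {T. bij_betw T S {1..card S}
     \<and> (\<forall>c. c \<notin> S \<longrightarrow> T c = 0)
     \<and> (\<forall>i j. (i, j + 1) \<in> S \<longrightarrow> T (i, j) < T (i, j + 1))
     \<and> (\<forall>i j. (i + 1, j) \<in> S \<longrightarrow> T (i, j) < T (i + 1, j))}"

definition adj :: "nat \<times> nat \<Rightarrow> nat \<times> nat \<Rightarrow> bool" where
  "adj p q \<longleftrightarrow> q = (fst p, snd p + 1) \<or> q = (fst p + 1, snd p)"

definition dc :: "(nat \<times> nat) set \<Rightarrow> bool" where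
  "dc S \<longleftrightarrow> (\<forall>i j. ((i+1,j) \<in> S \<longrightarrow> (i,j) \<in> S) \<and> ((i,j+1) \<in> S \<longrightarrow> (i,j) \<in> S))"

definition cS :: "(nat \<times> nat) set \<Rightarrow> int" where
  "cS S = (\<Sum>(i,j)\<in>S. (-1::int)^(i+j))"

lemma sytS_D:
  assumes "T \<in> sytS S"
  shows "bij_betw T S {1..card S}" "\<And>c. c \<notin> S \<Longrightarrow> T c = 0"
    "\<And>i j. (i, j + 1) \<in> S \<Longrightarrow> T (i, j) < T (i, j + 1)"
    "\<And>i j. (i + 1, j) \<in> S \<Longrightarrow> T (i, j) < T (i + 1, j)"
  using assms unfolding sytS_def by blast+

lemma sytS_constr:
  assumes "T \<in> sytS S" "y \<in> S" "adj x y" shows "T x < T y"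
proof -
  obtain a b where x: "x = (a, b)" by (cases x)
  show ?thesis using assms(3) sytS_D(3,4)[OF assms(1)] assms(2) unfolding adj_def x by auto
qed

lemma sytS_vals:
  assumes "T \<in> sytS S" shows "T x \<le> card S" "x \<in> S \<Longrightarrow> 1 \<le> T x"
proof -
  have "T ` S = {1..card S}" using sytS_D(1)[OF assms] by (simp add: bij_betw_def)
  then have "x \<in> S \<Longrightarrow> T x \<in> {1..card S}" by blast
  moreover have "x \<notin> S \<Longrightarrow> T x = 0" using sytS_D(2)[OF assms] .
  ultimately show "T x \<le> card S" "x \<in> S \<Longrightarrow> 1 \<le> T x" by (cases "x \<in> S"; auto)+
qed

lemma sytS_inj:
  assumes "T \<in> sytS S" "x \<in> S" "y \<in> S" "T x = T y" shows "x = y"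
  using assms unfolding sytS_def bij_betw_def inj_on_def by blast

lemma sytS_surj:
  assumes "T \<in> sytS S" "v \<in> {1..card S}" shows "\<exists>x\<in>S. T x = v"
proof -
  have "v \<in> T ` S" using assms unfolding sytS_def bij_betw_def by auto
  then show ?thesis by auto
qed

lemma finite_sytS:
  assumes "finite S" shows "finite (sytS S)"
proof -
  have "sytS S \<subseteq> {f. \<forall>x. (x \<in> S \<longrightarrow> f x \<in> {1..card S}) \<and> (x \<notin> S \<longrightarrow> f x = 0)}"
    unfolding sytS_def bij_betw_def by auto
  moreover have "finite {f. \<forall>x. (x \<in> S \<longrightarrow> f x \<in> {1..card S}) \<and> (x \<notin> S \<longrightarrow> f x = (0::nat))}"
    by (rule finite_set_of_finite_funs) (use assms in auto)
  ultimately show ?thesis by (rule finite_subset)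
qed

lemma invol_even:
  assumes "finite A" "\<forall>x\<in>A. f x \<in> A \<and> f x \<noteq> x \<and> f (f x) = x"
  shows "even (card A)"
  using assms
proof (induction "card A" arbitrary: A rule: less_induct)
  case less
  show ?case
  proof (cases "A = {}")
    case True then show ?thesis by simp
  next
    case False
    then obtain x where x: "x \<in> A" by blast
    define A' where "A' = A - {x, f x}"
    have fx: "f x \<in> A" "f x \<noteq> x" using less.prems x by auto
    have sub: "{x, f x} \<subseteq> A" using x fx by auto
    have c2: "card {x, f x} = 2" using fx by simp
    have "card {x, f x} \<le> card A" using card_mono[OF less.prems(1) sub] .
    moreover have "card A' = card A - card {x, f x}"
      unfolding A'_def using card_Diff_subset[OF _ sub] less.prems(1) finite_subset[OF sub] by simp
    ultimately have cA: "card A = card A' + 2" using c2 by simp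
    have "even (card A')"
    proof (rule less.hyps)
      show "card A' < card A" using cA by simp
      show "finite A'" using less.prems(1) unfolding A'_def by simp
      show "\<forall>y\<in>A'. f y \<in> A' \<and> f y \<noteq> y \<and> f (f y) = y"
      proof
        fix y assume y: "y \<in> A'"
        then have yA: "y \<in> A" "y \<noteq> x" "y \<noteq> f x" unfolding A'_def by auto
        have p: "f y \<in> A" "f y \<noteq> y" "f (f y) = y" using less.prems(2) yA(1) by auto
        have px: "f (f x) = x" using less.prems(2) x by auto
        have "f y \<noteq> x" using p(3) yA(3) by auto
        moreover have "f y \<noteq> f x" using p(3) px yA(2) by metis
        ultimately show "f y \<in> A' \<and> f y \<noteq> y \<and> f (f y) = y"
          using p unfolding A'_def by auto
      qed
    qed
    then show ?thesis using cA by simp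
  qed
qed

definition sig :: "nat \<Rightarrow> nat \<Rightarrow> nat" where
  "sig n v = (if v = n then n - 1 else if v = n - 1 then n else v)"

lemma sig_mono:
  assumes "a < b" "b \<le> n" "\<not> (a = n - 1 \<and> b = n)" "2 \<le> n"
  shows "sig n a < sig n b"
  using assms unfolding sig_def by auto

lemma sig_sig: "1 \<le> n \<Longrightarrow> sig n (sig n v) = v"
  unfolding sig_def by auto

lemma sig_swap_syt:
  assumes T: "T \<in> sytS S" and n: "card S = n" "2 \<le> n"
    and NA: "\<forall>x y. y \<in> S \<and> adj x y \<longrightarrow> \<not> (T x = n - 1 \<and> T y = n)"
  shows "sig n \<circ> T \<in> sytS S"
proof -
  have bij: "bij_betw T S {1..n}" using T n unfolding sytS_def by auto
  have bs: "bij_betw (sig n) {1..n} {1..n}"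
  proof (rule bij_betw_byWitness[where f' = "sig n"])
    show "\<forall>a\<in>{1..n}. sig n (sig n a) = a" using n sig_sig by auto
    show "\<forall>a\<in>{1..n}. sig n (sig n a) = a" using n sig_sig by auto
    show "sig n ` {1..n} \<subseteq> {1..n}" using n unfolding sig_def by auto
    show "sig n ` {1..n} \<subseteq> {1..n}" using n unfolding sig_def by auto
  qed
  have "bij_betw (sig n \<circ> T) S {1..n}" using bij bs by (rule bij_betw_trans)
  moreover have "\<forall>c. c \<notin> S \<longrightarrow> (sig n \<circ> T) c = 0"
    using T n unfolding sytS_def sig_def by auto
  moreover have gen: "(sig n \<circ> T) x < (sig n \<circ> T) y" if "y \<in> S" "adj x y" for x y
  proof (cases "x \<in> S")
    case True
    have "T x < T y" using sytS_constr[OF T that] .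
    moreover have "\<not> (T x = n - 1 \<and> T y = n)" using NA that by blast
    ultimately show ?thesis using sig_mono[of "T x" "T y" n] sytS_vals[OF T, of y] n by auto
  next
    case False
    then have "T x = 0" using sytS_D(2)[OF T] by blast
    moreover have "1 \<le> T y" "T y \<le> n" using sytS_vals[OF T] that n by auto
    ultimately show ?thesis using n unfolding sig_def by auto
  qed
  moreover have "\<forall>i j. (i, j + 1) \<in> S \<longrightarrow> (sig n \<circ> T) (i, j) < (sig n \<circ> T) (i, j + 1)"
    using gen unfolding adj_def by simp
  moreover have "\<forall>i j. (i + 1, j) \<in> S \<longrightarrow> (sig n \<circ> T) (i, j) < (sig n \<circ> T) (i + 1, j)"
    using gen unfolding adj_def by simp
  ultimately show ?thesis unfolding sytS_def using n by blast
qed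


lemma sytS_I:
  assumes "bij_betw T S {1..card S}" "\<And>c. c \<notin> S \<Longrightarrow> T c = 0"
    "\<And>u v. v \<in> S \<Longrightarrow> adj u v \<Longrightarrow> T u < T v"
  shows "T \<in> sytS S"
proof -
  have "\<forall>i j. (i, j + 1) \<in> S \<longrightarrow> T (i, j) < T (i, j + 1)" using assms(3) unfolding adj_def by simp
  moreover have "\<forall>i j. (i + 1, j) \<in> S \<longrightarrow> T (i, j) < T (i + 1, j)" using assms(3) unfolding adj_def by simp
  ultimately show ?thesis unfolding sytS_def using assms(1,2) by blast
qed

lemma adj_facts: "adj x y \<Longrightarrow> x \<noteq> y" "adj x y \<Longrightarrow> \<not> adj y x" "\<not> adj x x"
  unfolding adj_def by (cases x; cases y; auto)+

lemma small_cS: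
  assumes "finite S" "dc S" "card S \<le> 1" shows "cS S \<in> {0, 1}"
proof (cases "card S = 0")
  case True then have "S = {}" using assms(1) by simp
  then show ?thesis by (simp add: cS_def)
next
  case False
  then have "card S = 1" using assms(3) by simp
  then obtain z where z: "S = {z}" by (rule card_1_singletonE)
  obtain i j where ij: "z = (i, j)" by (cases z)
  have "i = 0"
  proof (rule ccontr)
    assume "i \<noteq> 0"
    then have "((i - 1) + 1, j) \<in> S" using z ij by simp
    then have "(i - 1, j) \<in> S" using assms(2) unfolding dc_def by blast
    then show False using z ij \<open>i \<noteq> 0\<close> by simp
  qed
  moreover have "j = 0"
  proof (rule ccontr)
    assume "j \<noteq> 0"
    then have "(i, (j - 1) + 1) \<in> S" using z ij by simp
    then have "(i, j - 1) \<in> S" using assms(2) unfolding dc_def by blast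
    then show False using z ij \<open>j \<noteq> 0\<close> by simp
  qed
  ultimately show ?thesis using z ij by (simp add: cS_def)
qed

lemma domino_bij:
  assumes S: "finite S" and xy: "x \<in> S" "y \<in> S" "adj x y"
    and R: "\<forall>z\<in>S. (adj x z \<or> adj y z) \<longrightarrow> z \<in> {x, y}"
    and n: "card S = n"
  shows "card {T \<in> sytS S. T x = n - 1 \<and> T y = n} = card (sytS (S - {x, y}))"
proof -
  define S' where "S' = S - {x, y}"
  have xney: "x \<noteq> y" using adj_facts(1)[OF xy(3)] .
  have cS': "card S' = n - 2" unfolding S'_def using S xy xney n by (simp add: card_Diff_subset)
  have "card {x, y} \<le> card S" using card_mono[OF S] xy by simp
  then have n2: "2 \<le> n" using n xney by simp
  have Seq: "S = insert x (insert y S')" unfolding S'_def using xy by blast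
  have xyS': "x \<notin> S'" "y \<notin> S'" unfolding S'_def by simp_all
  define res where "res T = (\<lambda>c. if c = x \<or> c = y then 0 else T c)" for T :: "nat \<times> nat \<Rightarrow> nat"
  define ext where "ext T0 = T0(x := n - 1, y := n)" for T0 :: "nat \<times> nat \<Rightarrow> nat"
  let ?A = "{T \<in> sytS S. T x = n - 1 \<and> T y = n}"
  have res_in: "res T \<in> sytS S'" if T: "T \<in> ?A" for T
  proof (rule sytS_I)
    have TS: "T \<in> sytS S" and Tx: "T x = n - 1" and Ty: "T y = n" using T by auto
    have bT: "bij_betw T S {1..n}" using sytS_D(1)[OF TS] n by simp
    have inj: "inj_on T S" using bT by (simp add: bij_betw_def)
    have "inj_on T S'" using inj_on_subset[OF inj, of S'] unfolding S'_def by blast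
    moreover have "\<And>a. a \<in> S' \<Longrightarrow> res T a = T a" using xyS' unfolding res_def by auto
    ultimately have "inj_on (res T) S'" using inj_on_cong[of S' "res T" T] by simp
    moreover have "res T ` S' = T ` S'" unfolding res_def S'_def by auto
    moreover have "T ` S' = T ` S - T ` {x, y}" unfolding S'_def
      using inj_on_image_set_diff[OF inj, of S "{x,y}"] xy by auto
    moreover have "T ` S = {1..n}" using bT by (simp add: bij_betw_def)
    moreover have "{1..n} - T ` {x, y} = {1..card S'}" using Tx Ty cS' n2 by auto
    ultimately show "bij_betw (res T) S' {1..card S'}" by (simp add: bij_betw_def)
    show "res T c = 0" if "c \<notin> S'" for c
    proof -
      have "c = x \<or> c = y \<or> c \<notin> S" using that unfolding S'_def by blast
      then show ?thesis using sytS_D(2)[OF TS, of c] unfolding res_def by auto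
    qed
    show "res T u < res T v" if "v \<in> S'" "adj u v" for u v
    proof -
      have vS: "v \<in> S" "v \<noteq> x" "v \<noteq> y" using that unfolding S'_def by auto
      have "1 \<le> T v" using sytS_vals(2)[OF TS vS(1)] .
      moreover have "T u < T v" using sytS_constr[OF TS vS(1) that(2)] .
      ultimately show ?thesis unfolding res_def using vS by auto
    qed
  qed
  have ext_in: "ext T0 \<in> ?A" if T0: "T0 \<in> sytS S'" for T0
  proof -
    have ext_S': "ext T0 c = T0 c" if "c \<in> S'" for c using that xyS' unfolding ext_def by auto
    have extx: "ext T0 x = n - 1" "ext T0 y = n" unfolding ext_def using xney by auto
    have le: "T0 c \<le> n - 2" for c using sytS_vals(1)[OF T0] cS' by simp
    have img: "ext T0 ` S = {1..n}"
    proof -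
      have "ext T0 ` S = ext T0 ` S' \<union> {n - 1, n}" using Seq extx by auto
      also have "ext T0 ` S' = T0 ` S'" using ext_S' by auto
      also have "T0 ` S' = {1..n-2}" using sytS_D(1)[OF T0] cS' by (simp add: bij_betw_def)
      finally show ?thesis using n2 by auto
    qed
    have "card (ext T0 ` S) = card S" using img n by simp
    then have "inj_on (ext T0) S" by (rule eq_card_imp_inj_on[OF S])
    then have "bij_betw (ext T0) S {1..card S}" using img n by (simp add: bij_betw_def)
    moreover have "ext T0 c = 0" if "c \<notin> S" for c
    proof -
      have "c \<noteq> x" "c \<noteq> y" "c \<notin> S'" using that xy unfolding S'_def by auto
      then show ?thesis using sytS_D(2)[OF T0] unfolding ext_def by auto
    qed
    moreover have "ext T0 u < ext T0 v" if vS: "v \<in> S" and uv: "adj u v" for u v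
    proof -
      consider "v = y" | "v = x" | "v \<in> S'" using vS unfolding S'_def by auto
      then show ?thesis
      proof cases
        case 1
        show ?thesis
        proof (cases "u = x")
          case True then show ?thesis using extx 1 n2 by simp
        next
          case False
          have "u \<noteq> y" using 1 uv adj_facts(3) by blast
          then have "ext T0 u = T0 u" using False unfolding ext_def by simp
          then show ?thesis using le[of u] extx 1 n2 by simp
        qed
      next
        case 2
        have "u \<noteq> x" using 2 uv adj_facts(3) by blast
        moreover have "u \<noteq> y" using 2 uv adj_facts(2) xy(3) by blast
        ultimately have "ext T0 u = T0 u" unfolding ext_def by simp
        then show ?thesis using le[of u] extx 2 n2 by simp
      next
        case 3
        have "u \<noteq> x \<and> u \<noteq> y"
        proof
          show "u \<noteq> x" using R vS uv 3 xyS' by blast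
          show "u \<noteq> y" using R vS uv 3 xyS' by blast
        qed
        then have "ext T0 u = T0 u" unfolding ext_def by simp
        moreover have "T0 u < T0 v" using sytS_constr[OF T0 3 uv] .
        ultimately show ?thesis using ext_S'[OF 3] by simp
      qed
    qed
    ultimately have "ext T0 \<in> sytS S" using n by (intro sytS_I) auto
    then show ?thesis using extx by simp
  qed
  have "bij_betw res ?A (sytS S')"
  proof (rule bij_betw_byWitness[where f' = ext])
    show "\<forall>T\<in>?A. ext (res T) = T"
    proof
      fix T assume "T \<in> ?A"
      then show "ext (res T) = T" unfolding ext_def res_def by (auto simp: fun_eq_iff)
    qed
    show "\<forall>T0\<in>sytS S'. res (ext T0) = T0"
    proof
      fix T0 assume T0: "T0 \<in> sytS S'"
      show "res (ext T0) = T0"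
        using sytS_D(2)[OF T0] xyS' unfolding ext_def res_def by (auto simp: fun_eq_iff)
    qed
    show "res ` ?A \<subseteq> sytS S'" using res_in by blast
    show "ext ` sytS S' \<subseteq> ?A" using ext_in by blast
  qed
  then show ?thesis unfolding S'_def by (rule bij_betw_same_card)
qed


lemma cS_domino:
  assumes S: "finite S" and xy: "x \<in> S" "y \<in> S" "adj x y"
  shows "cS (S - {x, y}) = cS S"
proof -
  have xney: "x \<noteq> y" using adj_facts(1)[OF xy(3)] .
  have Seq: "S = insert x (insert y (S - {x, y}))" using xy by blast
  have "cS S = (-1)^(fst x + snd x) + ((-1)^(fst y + snd y) + cS (S - {x, y}))"
    unfolding cS_def
    by (subst Seq, subst sum.insert) (use S xney in \<open>auto simp: case_prod_beta\<close>)
  moreover have "fst y + snd y = Suc (fst x + snd x)" using xy(3) unfolding adj_def by auto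
  ultimately show ?thesis by simp
qed

lemma dc_domino:
  assumes "dc S" "\<forall>z\<in>S. (adj x z \<or> adj y z) \<longrightarrow> z \<in> {x, y}"
  shows "dc (S - {x, y})"
  unfolding dc_def
proof (intro allI conjI impI)
  fix i j
  show "(i, j) \<in> S - {x, y}" if "(i + 1, j) \<in> S - {x, y}"
  proof -
    have "(i, j) \<in> S" using that assms(1) unfolding dc_def by blast
    moreover have "adj (i, j) (i + 1, j)" unfolding adj_def by simp
    ultimately show ?thesis using that assms(2) by blast
  qed
  show "(i, j) \<in> S - {x, y}" if "(i, j + 1) \<in> S - {x, y}"
  proof -
    have "(i, j) \<in> S" using that assms(1) unfolding dc_def by blast
    moreover have "adj (i, j) (i, j + 1)" unfolding adj_def by simp
    ultimately show ?thesis using that assms(2) by blast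
  qed
qed

lemma main_even:
  assumes "finite S" "dc S" "cS S \<notin> {0, 1}"
  shows "even (card (sytS S))"
  using assms
proof (induction "card S" arbitrary: S rule: less_induct)
  case less
  define n where "n = card S"
  have n2: "2 \<le> n" using small_cS[OF less.prems(1,2)] less.prems(3) unfolding n_def by linarith
  define NA where "NA T \<longleftrightarrow> (\<forall>x y. y \<in> S \<and> adj x y \<longrightarrow> \<not> (T x = n - 1 \<and> T y = n))"
    for T :: "nat \<times> nat \<Rightarrow> nat"
  define B where "B = {T \<in> sytS S. NA T}"
  define A where "A = {T \<in> sytS S. \<not> NA T}"
  have fin: "finite (sytS S)" using finite_sytS[OF less.prems(1)] .
  have split: "sytS S = A \<union> B" "A \<inter> B = {}" unfolding A_def B_def by auto
  have cardeq: "card (sytS S) = card A + card B"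
    using split fin by (simp add: card_Un_disjoint)
  have evB: "even (card B)"
  proof (rule invol_even[where f = "\<lambda>T. sig n \<circ> T"])
    show "finite B" using fin unfolding B_def by simp
    show "\<forall>T\<in>B. sig n \<circ> T \<in> B \<and> sig n \<circ> T \<noteq> T \<and> sig n \<circ> (sig n \<circ> T) = T"
    proof
      fix T assume TB: "T \<in> B"
      have TS: "T \<in> sytS S" and NT: "NA T" using TB unfolding B_def by auto
      have in1: "sig n \<circ> T \<in> sytS S"
        using sig_swap_syt[OF TS n_def[symmetric] n2] NT unfolding NA_def by blast
      have "NA (sig n \<circ> T)" unfolding NA_def
      proof (intro allI impI notI)
        fix x y assume a: "y \<in> S \<and> adj x y" and b: "(sig n \<circ> T) x = n - 1 \<and> (sig n \<circ> T) y = n"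
        have "T x = n" "T y = n - 1" using b n2 unfolding sig_def by (auto split: if_splits)
        moreover have "T x < T y" using sytS_constr[OF TS] a by blast
        ultimately show False by simp
      qed
      then have "sig n \<circ> T \<in> B" using in1 unfolding B_def by simp
      moreover have "sig n \<circ> T \<noteq> T"
      proof
        assume eq: "sig n \<circ> T = T"
        obtain c where "c \<in> S" "T c = n" using sytS_surj[OF TS, of n] n2 n_def by auto
        then have "sig n (T c) = T c" using eq by (metis comp_apply)
        then show False using \<open>T c = n\<close> n2 unfolding sig_def by simp
      qed
      moreover have "sig n \<circ> (sig n \<circ> T) = T" using sig_sig n2 by (simp add: fun_eq_iff)
      ultimately show "sig n \<circ> T \<in> B \<and> sig n \<circ> T \<noteq> T \<and> sig n \<circ> (sig n \<circ> T) = T" by blast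
    qed
  qed
  define P where "P = {(x, y). x \<in> S \<and> y \<in> S \<and> adj x y}"
  define Ax where "Ax p = {T \<in> sytS S. T (fst p) = n - 1 \<and> T (snd p) = n}" for p
  have "P \<subseteq> S \<times> S" unfolding P_def by auto
  then have finP: "finite P" using less.prems(1) finite_subset by blast
  have Aeq: "A = (\<Union>p\<in>P. Ax p)"
  proof
    show "A \<subseteq> (\<Union>p\<in>P. Ax p)"
    proof
      fix T assume "T \<in> A"
      then have TS: "T \<in> sytS S" and "\<not> NA T" unfolding A_def by auto
      then obtain x y where xy: "y \<in> S" "adj x y" "T x = n - 1" "T y = n" unfolding NA_def by blast
      have "x \<in> S"
      proof (rule ccontr)
        assume "x \<notin> S" then have "T x = 0" using sytS_D(2)[OF TS] by blast
        then show False using xy n2 by simp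
      qed
      then have "(x, y) \<in> P" using xy unfolding P_def by simp
      moreover have "T \<in> Ax (x, y)" using TS xy unfolding Ax_def by simp
      ultimately show "T \<in> (\<Union>p\<in>P. Ax p)" by blast
    qed
    show "(\<Union>p\<in>P. Ax p) \<subseteq> A"
    proof
      fix T assume "T \<in> (\<Union>p\<in>P. Ax p)"
      then obtain x y where "(x, y) \<in> P" "T \<in> Ax (x, y)" by auto
      then have "T \<in> sytS S" "y \<in> S" "adj x y" "T x = n - 1" "T y = n" unfolding Ax_def P_def by auto
      then show "T \<in> A" unfolding A_def NA_def by blast
    qed
  qed
  have cardA: "card A = (\<Sum>p\<in>P. card (Ax p))"
    unfolding Aeq
  proof (rule card_UN_disjoint[OF finP])
    show "\<forall>p\<in>P. finite (Ax p)" using fin unfolding Ax_def by simp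
    show "\<forall>p\<in>P. \<forall>q\<in>P. p \<noteq> q \<longrightarrow> Ax p \<inter> Ax q = {}"
    proof (intro ballI impI)
      fix p q assume p: "p \<in> P" and q: "q \<in> P" and pq: "p \<noteq> q"
      show "Ax p \<inter> Ax q = {}"
      proof (rule ccontr)
        assume "Ax p \<inter> Ax q \<noteq> {}"
        then obtain T where T: "T \<in> Ax p" "T \<in> Ax q" by blast
        have TS: "T \<in> sytS S" using T unfolding Ax_def by simp
        have "fst p = fst q" using sytS_inj[OF TS] T p q unfolding Ax_def P_def by auto
        moreover have "snd p = snd q" using sytS_inj[OF TS] T p q unfolding Ax_def P_def by auto
        ultimately show False using pq by (simp add: prod_eq_iff)
      qed
    qed
  qed
  have evAx: "even (card (Ax p))" if p: "p \<in> P" for p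
  proof -
    obtain x y where pxy: "p = (x, y)" by (cases p)
    have xy: "x \<in> S" "y \<in> S" "adj x y" using p unfolding pxy P_def by auto
    show ?thesis
    proof (cases "\<forall>z\<in>S. (adj x z \<or> adj y z) \<longrightarrow> z \<in> {x, y}")
      case False
      then obtain z where z: "z \<in> S" "adj x z \<or> adj y z" "z \<notin> {x, y}" by blast
      have "Ax p = {}"
      proof (rule ccontr)
        assume "Ax p \<noteq> {}"
        then obtain T where T: "T \<in> sytS S" "T x = n - 1" "T y = n" unfolding Ax_def pxy by auto
        have le: "T z \<le> n" using sytS_vals(1)[OF T(1)] n_def by simp
        show False
        proof (cases "adj x z")
          case True
          then have "T x < T z" using sytS_constr[OF T(1) z(1)] by blast
          then have "n - 1 < T z" using T(2) by simp
          then have "T z = T y" using le T(3) by simp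
          then show False using sytS_inj[OF T(1) z(1) xy(2)] z(3) by simp
        next
          case False
          then have "adj y z" using z(2) by blast
          then have "T y < T z" using sytS_constr[OF T(1) z(1)] by blast
          then have "n < T z" using T(3) by simp
          then show False using le by simp
        qed
      qed
      then show ?thesis by simp
    next
      case True
      have "card (Ax p) = card (sytS (S - {x, y}))"
        using domino_bij[OF less.prems(1) xy True n_def[symmetric]] unfolding Ax_def pxy by simp
      moreover have "even (card (sytS (S - {x, y})))"
      proof (rule less.hyps)
        have "card {x, y} = 2" using adj_facts(1)[OF xy(3)] by simp
        then show "card (S - {x, y}) < card S"
          using card_Diff_subset[of "{x,y}" S] less.prems(1) xy n2 n_def by simp
        show "finite (S - {x, y})" using less.prems(1) by simp
        show "dc (S - {x, y})" using dc_domino[OF less.prems(2) True] .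
        show "cS (S - {x, y}) \<notin> {0, 1}" using cS_domino[OF less.prems(1) xy] less.prems(3) by simp
      qed
      ultimately show ?thesis by simp
    qed
  qed
  have "even (card A)" unfolding cardA by (rule dvd_sum) (use evAx in blast)
  then show ?case using cardeq evB by simp
qed



definition ev1 :: "nat \<Rightarrow> int" where "ev1 a = (if odd a then 1 else 0)"

lemma sum_alt: "(\<Sum>j<a. (-1::int)^j) = ev1 a"
  by (induction a) (auto simp: ev1_def)

lemma yd_Cons: "young_diagram (a # r) = (\<lambda>j. (0, j)) ` {..<a} \<union> (\<lambda>(i, j). (Suc i, j)) ` young_diagram r"
proof (intro set_eqI iffI)
  fix c assume "c \<in> young_diagram (a # r)"
  then obtain i j where c: "c = (i, j)" "i < Suc (length r)" "j < (a # r) ! i"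
    unfolding young_diagram_def by auto
  show "c \<in> (\<lambda>j. (0, j)) ` {..<a} \<union> (\<lambda>(i, j). (Suc i, j)) ` young_diagram r"
  proof (cases i)
    case 0 then show ?thesis using c by auto
  next
    case (Suc k)
    then have "(k, j) \<in> young_diagram r" using c unfolding young_diagram_def by auto
    then show ?thesis using c Suc by force
  qed
next
  fix c assume "c \<in> (\<lambda>j. (0, j)) ` {..<a} \<union> (\<lambda>(i, j). (Suc i, j)) ` young_diagram r"
  then show "c \<in> young_diagram (a # r)" unfolding young_diagram_def by auto
qed

lemma yd_Nil: "young_diagram [] = {}" unfolding young_diagram_def by simp

lemma finite_yd: "finite (young_diagram lam)"
  by (induction lam) (auto simp: yd_Nil yd_Cons)

lemma inj_shiftrow: "inj (\<lambda>(i::nat, j::nat). (Suc i, j))"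
  by (auto simp: inj_def)

lemma card_yd: "card (young_diagram lam) = sum_list lam"
proof (induction lam)
  case Nil then show ?case by (simp add: yd_Nil)
next
  case (Cons a r)
  have d: "(\<lambda>j. (0::nat, j)) ` {..<a} \<inter> (\<lambda>(i, j). (Suc i, j)) ` young_diagram r = {}" by auto
  have "card (young_diagram (a # r)) = card ((\<lambda>j. (0::nat, j)) ` {..<a}) + card ((\<lambda>(i, j). (Suc i, j)) ` young_diagram r)"
    unfolding yd_Cons by (rule card_Un_disjoint) (use d finite_yd in auto)
  also have "card ((\<lambda>j. (0::nat, j)) ` {..<a}) = a" by (simp add: card_image inj_on_def)
  also have "card ((\<lambda>(i, j). (Suc i, j)) ` young_diagram r) = card (young_diagram r)"
    by (rule card_image) (use inj_shiftrow in \<open>auto simp: inj_on_def\<close>)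
  finally show ?case using Cons by simp
qed

lemma cS_yd_Cons: "cS (young_diagram (a # r)) = ev1 a - cS (young_diagram r)"
proof -
  have d: "(\<lambda>j. (0::nat, j)) ` {..<a} \<inter> (\<lambda>(i, j). (Suc i, j)) ` young_diagram r = {}" by auto
  have "cS (young_diagram (a # r)) = cS ((\<lambda>j. (0::nat, j)) ` {..<a}) + cS ((\<lambda>(i, j). (Suc i, j)) ` young_diagram r)"
    unfolding yd_Cons cS_def by (rule sum.union_disjoint) (use d finite_yd in auto)
  also have "cS ((\<lambda>j. (0::nat, j)) ` {..<a}) = (\<Sum>j<a. (-1::int)^j)"
    unfolding cS_def by (subst sum.reindex) (auto simp: inj_on_def)
  also have "cS ((\<lambda>(i, j). (Suc i, j)) ` young_diagram r) = - cS (young_diagram r)"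
    unfolding cS_def by (subst sum.reindex) (auto simp: inj_on_def case_prod_beta sum_negf intro!: sum.cong)
  finally show ?thesis using sum_alt by simp
qed

lemma dc_yd: assumes "sorted_wrt (\<ge>) lam" shows "dc (young_diagram lam)"
  unfolding dc_def
proof (intro allI conjI impI)
  fix i j
  show "(i, j) \<in> young_diagram lam" if "(i + 1, j) \<in> young_diagram lam"
  proof -
    have "i + 1 < length lam" "j < lam ! (i+1)" using that unfolding young_diagram_def by auto
    moreover have "lam ! (i+1) \<le> lam ! i" using sorted_wrt_nth_less[OF assms, of i "i+1"] calculation by simp
    ultimately show ?thesis unfolding young_diagram_def by auto
  qed
  show "(i, j) \<in> young_diagram lam" if "(i, j + 1) \<in> young_diagram lam"
    using that unfolding young_diagram_def by auto
qed

definition gs :: "nat set \<Rightarrow> int" where "gs X = (\<Sum>x\<in>X. (-1::int)^x)"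

lemma g_gs: assumes "finite X" shows "g X = gs X"
proof -
  have "gs X = (\<Sum>x\<in>{x\<in>X. even x}. (-1::int)^x) + (\<Sum>x\<in>{x\<in>X. odd x}. (-1::int)^x)"
    unfolding gs_def using assms by (subst sum.union_disjoint[symmetric]) (auto intro: sum.cong)
  also have "(\<Sum>x\<in>{x\<in>X. even x}. (-1::int)^x) = int (card {x\<in>X. even x})"
    by simp
  also have "(\<Sum>x\<in>{x\<in>X. odd x}. (-1::int)^x) = - int (card {x\<in>X. odd x})"
    by simp
  finally show ?thesis unfolding g_def by simp
qed

lemma hook_alt: "hook_set lam = (\<lambda>i. lam ! i + (length lam - 1 - i)) ` {..<length lam}"
  unfolding hook_set_def image_def lessThan_iff by blast

lemma hook_Cons: "hook_set (a # r) = insert (a + length r) (hook_set r)"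
proof -
  have "{..<length (a # r)} = insert 0 (Suc ` {..<length r})"
    by (auto simp: image_iff less_Suc_eq_0_disj)
  then show ?thesis unfolding hook_alt by (auto simp: image_image)
qed

lemma hook_notin:
  assumes "sorted_wrt (\<ge>) (a # r)" shows "a + length r \<notin> hook_set r"
proof
  assume "a + length r \<in> hook_set r"
  then obtain i where i: "i < length r" "a + length r = r ! i + (length r - 1 - i)"
    unfolding hook_alt by auto
  have "r ! i \<le> a" using assms i(1) by (simp add: nth_mem)
  then show False using i by linarith
qed

lemma hook_facts0:
  assumes "sorted_wrt (\<ge>) lam"
  shows "finite (hook_set lam) \<and> card (hook_set lam) = length lam \<and>
    gs (hook_set lam) = (-1)^(length lam + 1) * (ev1 (length lam) - 2 * cS (young_diagram lam))"
  using assms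
proof (induction lam)
  case Nil
  show ?case by (simp add: hook_alt gs_def ev1_def yd_Nil cS_def)
next
  case (Cons a r)
  have sr: "sorted_wrt (\<ge>) r" using Cons.prems by simp
  have ni: "a + length r \<notin> hook_set r" using hook_notin[OF Cons.prems] .
  have IH: "finite (hook_set r)" "card (hook_set r) = length r"
    "gs (hook_set r) = (-1)^(length r + 1) * (ev1 (length r) - 2 * cS (young_diagram r))"
    using Cons.IH[OF sr] by auto
  have "gs (hook_set (a # r)) = (-1)^(a + length r) + gs (hook_set r)"
    unfolding hook_Cons gs_def using IH(1) ni by simp
  also have "\<dots> = (-1)^(a + length r) + (-1)^(length r + 1) * (ev1 (length r) - 2 * cS (young_diagram r))"
    using IH(3) by simp
  finally have "gs (hook_set (a # r)) = (-1)^(length (a#r) + 1) * (ev1 (length (a#r)) - 2 * cS (young_diagram (a#r)))"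
    unfolding cS_yd_Cons
    by (cases "even a"; cases "even (length r)") (simp_all add: ev1_def power_add minus_one_power_iff algebra_simps)
  then show ?case using IH(1,2) ni by (simp add: hook_Cons)
qed

lemma hook_facts:
  assumes "sorted_wrt (\<ge>) lam"
  shows "finite (hook_set lam)" "card (hook_set lam) = length lam"
    "gs (hook_set lam) = (-1)^(length lam + 1) * (ev1 (length lam) - 2 * cS (young_diagram lam))"
  using hook_facts0[OF assms] by auto

lemma shift_facts:
  assumes "finite Y"
  shows "finite (shift_set Y r)" "card (shift_set Y r) = card Y + r"
    "gs (shift_set Y r) = (-1)^r * gs Y + ev1 r"
proof -
  have d: "(\<lambda>y. y + r) ` Y \<inter> {0..<r} = {}" by auto
  have inj: "inj_on (\<lambda>y. y + r) Y" by (simp add: inj_on_def)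
  show "finite (shift_set Y r)" unfolding shift_set_def using assms by simp
  show "card (shift_set Y r) = card Y + r" unfolding shift_set_def
    using card_Un_disjoint[OF _ _ d] assms card_image[OF inj] by simp
  have "gs (shift_set Y r) = (\<Sum>x\<in>(\<lambda>y. y + r) ` Y. (-1::int)^x) + (\<Sum>x\<in>{0..<r}. (-1::int)^x)"
    unfolding gs_def shift_set_def using sum.union_disjoint[OF _ _ d] assms by simp
  also have "(\<Sum>x\<in>(\<lambda>y. y + r) ` Y. (-1::int)^x) = (-1)^r * gs Y"
  proof -
    have "(\<Sum>x\<in>(\<lambda>y. y + r) ` Y. (-1::int)^x) = (\<Sum>y\<in>Y. (-1::int)^(y + r))"
      using sum.reindex[OF inj, of "\<lambda>x. (-1::int)^x"] by (simp add: comp_def)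
    then show ?thesis unfolding gs_def by (simp add: power_add sum_distrib_left mult.commute)
  qed
  also have "(\<Sum>x\<in>{0..<r}. (-1::int)^x) = ev1 r" using sum_alt by (simp add: lessThan_atLeast0)
  finally show "gs (shift_set Y r) = (-1)^r * gs Y + ev1 r" .
qed

lemma cS_parity: "finite S \<Longrightarrow> \<exists>w. cS S = int (card S) - 2 * w"
proof (induction S rule: finite_induct)
  case empty then show ?case by (simp add: cS_def)
next
  case (insert x F)
  then obtain w where w: "cS F = int (card F) - 2 * w" by blast
  have "cS (insert x F) = (-1)^(fst x + snd x) + cS F"
    unfolding cS_def using insert(1,2) by (simp add: case_prod_beta)
  then show ?case
  proof (cases "even (fst x + snd x)")
    case True then show ?thesis using w insert(1,2) \<open>cS (insert x F) = _\<close> by (intro exI[of _ w]) simp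
  next
    case False then show ?thesis using w insert(1,2) \<open>cS (insert x F) = _\<close> by (intro exI[of _ "w+1"]) simp
  qed
qed

theorem lemma4p5:
  fixes n :: nat and lam :: "nat list" and X :: "nat set"
  assumes "is_partition n lam"
    and "odd (num_syt lam)"
    and "is_beta_set lam X"
  shows "g X = (if even (card X) then 1 - (-1) ^ n else (-1) ^ n)"
proof -
  define S where "S = young_diagram lam"
  have sorted: "sorted_wrt (\<ge>) lam" and sn: "sum_list lam = n" using assms(1) unfolding is_partition_def by auto
  have finS: "finite S" unfolding S_def by (rule finite_yd)
  have cardS: "card S = n" unfolding S_def using card_yd sn by simp
  have "syt lam = sytS S" unfolding syt_def sytS_def S_def card_yd ..
  then have "odd (card (sytS S))" using assms(2) unfolding num_syt_def by simp
  then have c01: "cS S \<in> {0, 1}" using main_even[OF finS] dc_yd[OF sorted] unfolding S_def by blast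
  obtain w where w: "cS S = int n - 2 * w" using cS_parity[OF finS] cardS by blast
  have cval: "cS S = (if even n then 0 else 1)"
  proof -
    have "cS S = 0 \<or> cS S = 1" using c01 by simp
    then show ?thesis using w by presburger
  qed
  obtain r where X: "X = shift_set (hook_set lam) r" using assms(3) unfolding is_beta_set_def by blast
  note hf = hook_facts[OF sorted]
  note sf = shift_facts[OF hf(1), of r]
  have cX: "card X = length lam + r" using sf(2) hf(2) X by simp
  have "g X = gs X" using g_gs sf(1) X by simp
  also have "\<dots> = (-1)^r * ((-1)^(length lam + 1) * (ev1 (length lam) - 2 * cS S)) + ev1 r"
    using sf(3) hf(3) X S_def by simp
  finally show ?thesis unfolding cX cval
    by (simp add: ev1_def power_add minus_one_power_iff)
qed

end
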